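(* Let $n \ge 5$. (a) Let $S, S'$ be sets of transpositions in the symmetric group $S_n$, each generating $S_n$. Then the Cayley graphs $\mathrm{Cay}(S_n,S)$ and $\mathrm{Cay}(S_n,S')$ are isomorphic if and only if the transposition graphs $T(S)$ and $T(S')$ are isomorphic. (b) Let $S$ be a set of transpositions generating $S_n$. Then the Cayley graph $\mathrm{Cay}(S_n,S)$ is edge-transitive if and only if the transposition graph $T(S)$ is edge-transitive.
   Context: For a group $H$ and a subset $S \subseteq H$ with $1 \notin S$ and $S = S^{-1}$, the Cayley graph $\mathrm{Cay}(H,S)$ is the simple undirected graph with vertex set $H$ and edge set $\{\{h, sh\} : h \in H, s \in S\}$. For a set $S$ of transpositions in $S_n$, the transposition graph $T(S)$ is the simple graph with vertex set $\{1,\ldots,n\}$ in which $i$ and $j$ are adjacent if and only if $(i,j) \in S$. A graph $X$ is edge-transitive if for any two edges $\{u,v\},\{x,y\}$ of $X$ there is an automorphism $g$ of $X$ with $\{u^g, v^g\} = \{x,y\}$. *)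

theory Defs
  imports "HOL-Combinatorics.Combinatorics"
begin

text \<open>Simple graphs are given by a vertex set V and a symmetric, irreflexive
adjacency predicate (on V).\<close>

definition graph_iso :: "'a set \<Rightarrow> ('a \<Rightarrow> 'a \<Rightarrow> bool) \<Rightarrow> 'b set \<Rightarrow> ('b \<Rightarrow> 'b \<Rightarrow> bool) \<Rightarrow> bool" where
  "graph_iso V E V' E' \<longleftrightarrow>
     (\<exists>f. bij_betw f V V' \<and> (\<forall>x\<in>V. \<forall>y\<in>V. E x y \<longleftrightarrow> E' (f x) (f y)))"

definition graph_aut :: "'a set \<Rightarrow> ('a \<Rightarrow> 'a \<Rightarrow> bool) \<Rightarrow> ('a \<Rightarrow> 'a) \<Rightarrow> bool" where
  "graph_aut V E g \<longleftrightarrow> bij_betw g V V \<and> (\<forall>x\<in>V. \<forall>y\<in>V. E x y \<longleftrightarrow> E (g x) (g y))"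

definition edge_transitive :: "'a set \<Rightarrow> ('a \<Rightarrow> 'a \<Rightarrow> bool) \<Rightarrow> bool" where
  "edge_transitive V E \<longleftrightarrow>
     (\<forall>u\<in>V. \<forall>v\<in>V. \<forall>x\<in>V. \<forall>y\<in>V. E u v \<longrightarrow> E x y \<longrightarrow>
        (\<exists>g. graph_aut V E g \<and> {g u, g v} = {x, y}))"

definition Sym :: "nat \<Rightarrow> (nat \<Rightarrow> nat) set" where
  "Sym n = {p. p permutes {1..n}}"

definition is_transposition :: "nat \<Rightarrow> (nat \<Rightarrow> nat) \<Rightarrow> bool" where
  "is_transposition n s \<longleftrightarrow> (\<exists>i\<in>{1..n}. \<exists>j\<in>{1..n}. i \<noteq> j \<and> s = transpose i j)"

inductive_set generated :: "(nat \<Rightarrow> nat) set \<Rightarrow> (nat \<Rightarrow> nat) set" for S where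
  gen_id: "id \<in> generated S"
| gen_mult: "s \<in> S \<Longrightarrow> g \<in> generated S \<Longrightarrow> s \<circ> g \<in> generated S"
| gen_inv_mult: "s \<in> S \<Longrightarrow> g \<in> generated S \<Longrightarrow> inv s \<circ> g \<in> generated S"

definition generates_Sym :: "nat \<Rightarrow> (nat \<Rightarrow> nat) set \<Rightarrow> bool" where
  "generates_Sym n S \<longleftrightarrow> generated S = Sym n"

definition cay_adj :: "(nat \<Rightarrow> nat) set \<Rightarrow> (nat \<Rightarrow> nat) \<Rightarrow> (nat \<Rightarrow> nat) \<Rightarrow> bool" where
  "cay_adj S g h \<longleftrightarrow> (\<exists>s\<in>S. h = s \<circ> g)"

definition trans_adj :: "(nat \<Rightarrow> nat) set \<Rightarrow> nat \<Rightarrow> nat \<Rightarrow> bool" where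
  "trans_adj S i j \<longleftrightarrow> i \<noteq> j \<and> transpose i j \<in> S"

end

theory Submission
  imports Defs
begin


definition mv :: "(nat \<Rightarrow> nat) \<Rightarrow> nat set" where "mv f = {x. f x \<noteq> x}"

definition DisjP where "DisjP n S s t \<longleftrightarrow> (\<exists>x\<in>Sym n. x \<noteq> id \<and> cay_adj S s x \<and> cay_adj S t x \<and>
   (\<forall>y\<in>Sym n. y \<noteq> id \<and> cay_adj S s y \<and> cay_adj S t y \<longrightarrow> y = x))"
definition TriP where "TriP n S s t u \<longleftrightarrow> (\<exists>x\<in>Sym n. x \<noteq> id \<and> cay_adj S s x \<and> cay_adj S t x \<and> cay_adj S u x)"

lemma mv_tr: fixes i j :: nat shows "i \<noteq> j \<Longrightarrow> mv (transpose i j) = {i,j}"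
  by (auto simp: mv_def transpose_def)

lemma tr_eq: fixes i j k l :: nat shows "i \<noteq> j \<Longrightarrow> k \<noteq> l \<Longrightarrow> transpose i j = transpose k l \<longleftrightarrow> {i,j} = {k,l}"
proof
  assume "i \<noteq> j" "k \<noteq> l" "transpose i j = transpose k l"
  then have "mv (transpose i j) = mv (transpose k l)" by simp
  then show "{i,j} = {k,l}" using mv_tr \<open>i \<noteq> j\<close> \<open>k \<noteq> l\<close> by simp
next
  assume "{i,j} = {k,l}"
  then have "(i = k \<and> j = l) \<or> (i = l \<and> j = k)" by (simp add: doubleton_eq_iff)
  then show "transpose i j = transpose k l" using transpose_commute by metis
qed

lemma F1:
  assumes d: "i\<noteq>j" "i\<noteq>k" "i\<noteq>l" "j\<noteq>k" "j\<noteq>l" "k\<noteq>l" "p\<noteq>q" "r\<noteq>w"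
   and e: "transpose p q \<circ> transpose i j = transpose r w \<circ> transpose k l"
   and ne: "transpose p q \<noteq> transpose i j"
  shows "transpose p q = transpose k l"
proof -
  have E: "\<And>x. transpose p q (transpose i j x) = transpose r w (transpose k l x)"
    using e by (metis comp_apply)
  note E1 = E[of i] E[of j] E[of k] E[of l] E[of p] E[of q] E[of r] E[of w]
  show ?thesis using d ne E1 unfolding transpose_def fun_eq_iff
    by (smt (verit))
qed

lemma F2:
  assumes d: "i\<noteq>j" "i\<noteq>k" "j\<noteq>k" "p\<noteq>q" "r\<noteq>w"
   and e: "transpose p q \<circ> transpose i j = transpose r w \<circ> transpose j k"
   and ne: "transpose p q \<noteq> transpose i j"
  shows "(transpose p q = transpose j k \<and> transpose r w = transpose i k) \<or>
         (transpose p q = transpose i k \<and> transpose r w = transpose i j)"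
proof -
  have E: "\<And>x. transpose p q (transpose i j x) = transpose r w (transpose j k x)"
    using e by (metis comp_apply)
  note E1 = E[of i] E[of j] E[of k] E[of p] E[of q] E[of r] E[of w]
  show ?thesis using d ne E1 unfolding transpose_def fun_eq_iff
    by (smt (verit))
qed

lemma triangle_eqs:
  assumes d: "i\<noteq>j" "i\<noteq>k" "j\<noteq>k"
  shows "transpose i k \<circ> transpose i j = transpose i j \<circ> transpose j k"
    "transpose j k \<circ> transpose i k = transpose i j \<circ> transpose j k"
    "transpose j k \<circ> transpose i j = transpose i k \<circ> transpose j k"
  using d by (auto simp: fun_eq_iff transpose_def)

lemma disj_comm:
  assumes d: "i\<noteq>k" "i\<noteq>l" "j\<noteq>k" "j\<noteq>l"
  shows "transpose k l \<circ> transpose i j = transpose i j \<circ> transpose k l"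
  using d by (auto simp: fun_eq_iff transpose_def)

lemma nf:
  assumes "i \<noteq> j" "k \<noteq> l" "{i,j} \<inter> {k,l} \<noteq> {}" "{i,j} \<noteq> {k,l}"
  shows "\<exists>a b c. a \<noteq> b \<and> a \<noteq> c \<and> b \<noteq> c \<and> {a,b,c} \<subseteq> {i,j,k,l} \<and>
     transpose i j = transpose a b \<and> transpose k l = transpose b c"
proof -
  have "i = k \<or> i = l \<or> j = k \<or> j = l" using assms(3) by auto
  then show ?thesis
  proof (elim disjE)
    assume "i = k" then show ?thesis using assms
      by (intro exI[of _ j] exI[of _ i] exI[of _ l]) (auto simp: transpose_commute)
  next
    assume "i = l" then show ?thesis using assms
      by (intro exI[of _ j] exI[of _ i] exI[of _ k]) (auto simp: transpose_commute)
  next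
    assume "j = k" then show ?thesis using assms
      by (intro exI[of _ i] exI[of _ j] exI[of _ l]) (auto simp: transpose_commute)
  next
    assume "j = l" then show ?thesis using assms
      by (intro exI[of _ i] exI[of _ j] exI[of _ k]) (auto simp: transpose_commute)
  qed
qed

lemma comp_cancel:
  assumes "s \<circ> s = id" "a \<circ> s = b \<circ> s" shows "a = b"
proof -
  have "a = a \<circ> (s \<circ> s)" using assms by simp
  also have "\<dots> = b \<circ> (s \<circ> s)" using assms(2) by (simp add: o_assoc)
  finally show ?thesis using assms by simp
qed

locale TS =
  fixes n :: nat and S :: "(nat \<Rightarrow> nat) set"
  assumes TS: "\<forall>s\<in>S. is_transposition n s"
begin

lemma trS: "s \<in> S \<Longrightarrow> \<exists>i j. i \<in> {1..n} \<and> j \<in> {1..n} \<and> i \<noteq> j \<and> s = transpose i j"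
  using TS unfolding is_transposition_def by blast

lemma S_Sym: "s \<in> S \<Longrightarrow> s \<in> Sym n"
proof -
  assume "s \<in> S"
  then obtain i j where "i \<in> {1..n}" "j \<in> {1..n}" "s = transpose i j" using trS by blast
  then show ?thesis unfolding Sym_def by (simp add: permutes_swap_id)
qed

lemma ss: "s \<in> S \<Longrightarrow> s \<circ> s = id"
proof -
  assume "s \<in> S"
  then obtain i j where "s = transpose i j" using trS by blast
  then show ?thesis by simp
qed

lemma adj_Sym: "x \<in> Sym n \<Longrightarrow> cay_adj S x y \<Longrightarrow> y \<in> Sym n"
  unfolding cay_adj_def using S_Sym unfolding Sym_def by (auto intro: permutes_compose)

lemma G1:
  assumes s: "s \<in> S" and t: "t \<in> S" and st: "s \<noteq> t"
  shows "DisjP n S s t \<longleftrightarrow> mv s \<inter> mv t = {}"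
proof -
  obtain i j where ij: "i \<noteq> j" "s = transpose i j" using trS s by blast
  obtain k l where kl: "k \<noteq> l" "t = transpose k l" using trS t by blast
  show ?thesis
  proof (cases "{i,j} \<inter> {k,l} = {}")
    case True
    have d: "i\<noteq>k" "i\<noteq>l" "j\<noteq>k" "j\<noteq>l" using True by auto
    have mvd: "mv s \<inter> mv t = {}" using True ij kl mv_tr by simp
    let ?x = "t \<circ> s"
    have xS: "?x \<in> Sym n" using S_Sym s t unfolding Sym_def by (auto intro: permutes_compose)
    have xid: "?x \<noteq> id"
    proof
      assume "?x = id"
      then have "t \<circ> s = s \<circ> s" using ss s by simp
      then show False using comp_cancel[OF ss[OF s]] st by metis
    qed
    have a1: "cay_adj S s ?x" using t unfolding cay_adj_def by blast
    have a2: "cay_adj S t ?x" using s disj_comm[OF d] ij kl unfolding cay_adj_def by metis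
    have un: "y = ?x" if y: "y \<in> Sym n" "y \<noteq> id" "cay_adj S s y" "cay_adj S t y" for y
    proof -
      obtain a where a: "a \<in> S" "y = a \<circ> s" using y unfolding cay_adj_def by blast
      obtain b where b: "b \<in> S" "y = b \<circ> t" using y unfolding cay_adj_def by blast
      obtain p q where pq: "p \<noteq> q" "a = transpose p q" using trS a by blast
      obtain r w where rw: "r \<noteq> w" "b = transpose r w" using trS b by blast
      have "a \<noteq> s" using y a ss s by auto
      then have "a = t" using F1[OF ij(1) d(1,2) d(3,4) kl(1) pq(1) rw(1)] a b pq rw ij kl by metis
      then show ?thesis using a by simp
    qed
    have "DisjP n S s t" unfolding DisjP_def using xS xid a1 a2 un by blast
    then show ?thesis using mvd by simp
  next
    case False
    have "{i,j} \<noteq> {k,l}" using st ij kl tr_eq by metis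
    then obtain a b c where abc: "a \<noteq> b" "a \<noteq> c" "b \<noteq> c" "{a,b,c} \<subseteq> {i,j,k,l}"
      "s = transpose a b" "t = transpose b c" using nf[OF ij(1) kl(1) False] ij kl by metis
    have mvd: "mv s \<inter> mv t \<noteq> {}" using abc mv_tr by simp
    have "\<not> DisjP n S s t"
    proof
      assume D: "DisjP n S s t"
      then obtain x where x: "x \<in> Sym n" "x \<noteq> id" "cay_adj S s x" "cay_adj S t x"
        and xu: "\<And>y. y \<in> Sym n \<Longrightarrow> y \<noteq> id \<Longrightarrow> cay_adj S s y \<Longrightarrow> cay_adj S t y \<Longrightarrow> y = x"
        unfolding DisjP_def by blast
      show False
      proof (cases "transpose a c \<in> S")
        case False
        obtain \<alpha> where \<alpha>: "\<alpha> \<in> S" "x = \<alpha> \<circ> s" using x unfolding cay_adj_def by blast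
        obtain \<beta> where \<beta>: "\<beta> \<in> S" "x = \<beta> \<circ> t" using x unfolding cay_adj_def by blast
        obtain p q where pq: "p \<noteq> q" "\<alpha> = transpose p q" using trS \<alpha> by blast
        obtain r w where rw: "r \<noteq> w" "\<beta> = transpose r w" using trS \<beta> by blast
        have "\<alpha> \<noteq> s" using x \<alpha> ss s by auto
        then have "\<alpha> = transpose a c \<or> \<beta> = transpose a c"
          using F2[OF abc(1,2,3) pq(1) rw(1)] \<alpha> \<beta> pq rw abc by metis
        then show False using False \<alpha> \<beta> by blast
      next
        case True
        let ?x1 = "t \<circ> s" and ?x2 = "transpose a c \<circ> s"
        have x1S: "?x1 \<in> Sym n" using S_Sym s t unfolding Sym_def by (auto intro: permutes_compose)
        have x2S: "?x2 \<in> Sym n" using S_Sym s True unfolding Sym_def by (auto intro: permutes_compose)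
        have ne1: "?x1 \<noteq> id"
        proof
          assume "?x1 = id"
          then have "t \<circ> s = s \<circ> s" using ss s by simp
          then show False using comp_cancel[OF ss[OF s]] st by metis
        qed
        have tac: "transpose a c \<noteq> s" using abc by (simp add: tr_eq doubleton_eq_iff)
        have ne2: "?x2 \<noteq> id"
        proof
          assume "?x2 = id"
          then have "transpose a c \<circ> s = s \<circ> s" using ss s by simp
          then show False using comp_cancel[OF ss[OF s]] tac by metis
        qed
        have a11: "cay_adj S s ?x1" using t unfolding cay_adj_def by blast
        have a12: "cay_adj S t ?x1" using True triangle_eqs(3)[OF abc(1,2,3)] abc unfolding cay_adj_def by metis
        have a21: "cay_adj S s ?x2" using True unfolding cay_adj_def by blast
        have a22: "cay_adj S t ?x2" using s triangle_eqs(1)[OF abc(1,2,3)] abc unfolding cay_adj_def by metis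
        have "?x1 = ?x2" using xu[OF x1S ne1 a11 a12] xu[OF x2S ne2 a21 a22] by simp
        then have "t = transpose a c" using comp_cancel[OF ss[OF s]] by metis
        then show False using abc by (simp add: tr_eq doubleton_eq_iff)
      qed
    qed
    then show ?thesis using mvd by simp
  qed
qed

lemma G2:
  assumes s: "s \<in> S" and t: "t \<in> S" and u: "u \<in> S" and d: "s \<noteq> t" "s \<noteq> u" "t \<noteq> u"
    and i: "mv s \<inter> mv t \<noteq> {}" "mv s \<inter> mv u \<noteq> {}" "mv t \<inter> mv u \<noteq> {}"
  shows "TriP n S s t u \<longleftrightarrow> mv s \<inter> mv t \<inter> mv u = {}"
proof -
  obtain i j where ij: "i \<noteq> j" "s = transpose i j" using trS s by blast
  obtain k l where kl: "k \<noteq> l" "t = transpose k l" using trS t by blast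
  obtain p q where pq: "p \<noteq> q" "u = transpose p q" using trS u by blast
  have "{i,j} \<noteq> {k,l}" using d ij kl tr_eq by metis
  moreover have "{i,j} \<inter> {k,l} \<noteq> {}" using i ij kl mv_tr by simp
  ultimately obtain a b c where abc: "a \<noteq> b" "a \<noteq> c" "b \<noteq> c"
      "s = transpose a b" "t = transpose b c" using nf[OF ij(1) kl(1)] ij kl by metis
  have mvs: "mv s = {a,b}" "mv t = {b,c}" "mv u = {p,q}" using abc pq mv_tr by auto
  show ?thesis
  proof (cases "b \<in> mv u")
    case False
    have "a \<in> mv u" "c \<in> mv u" using i mvs False by auto
    then have "{p,q} = {a,c}" using mvs abc pq by auto
    then have uac: "u = transpose a c" using pq abc tr_eq by metis
    let ?x = "transpose a c \<circ> transpose a b"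
    have xS: "?x \<in> Sym n" using S_Sym s u abc uac unfolding Sym_def by (auto intro: permutes_compose)
    have tac: "transpose a c \<noteq> s" using abc by (simp add: tr_eq doubleton_eq_iff)
    have ne: "?x \<noteq> id"
    proof
      assume "?x = id"
      then have "transpose a c \<circ> s = s \<circ> s" using ss s abc by simp
      then show False using comp_cancel[OF ss[OF s]] tac by metis
    qed
    have "cay_adj S s ?x" using u uac abc unfolding cay_adj_def by blast
    moreover have "cay_adj S t ?x" using s abc triangle_eqs(1)[OF abc(1,2,3)] unfolding cay_adj_def by metis
    moreover have "cay_adj S u ?x" using t abc uac triangle_eqs(1,2)[OF abc(1,2,3)] unfolding cay_adj_def by metis
    ultimately have "TriP n S s t u" unfolding TriP_def using xS ne by blast
    moreover have "mv s \<inter> mv t \<inter> mv u = {}" using mvs False abc by auto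
    ultimately show ?thesis by simp
  next
    case True
    obtain e where e: "e \<noteq> b" "u = transpose b e"
    proof (cases "p = b")
      case True then show ?thesis using that pq by metis
    next
      case False then have "q = b" using \<open>b \<in> mv u\<close> mvs by auto
      then show ?thesis using that pq False transpose_commute by metis
    qed
    have ea: "e \<noteq> a" using d abc e tr_eq transpose_commute by metis
    have ec: "e \<noteq> c" using d abc e by metis
    have "\<not> TriP n S s t u"
    proof
      assume "TriP n S s t u"
      then obtain x where x: "x \<noteq> id" "cay_adj S s x" "cay_adj S t x" "cay_adj S u x"
        unfolding TriP_def by blast
      obtain \<alpha> where \<alpha>: "\<alpha> \<in> S" "x = \<alpha> \<circ> s" using x unfolding cay_adj_def by blast
      obtain \<beta> where \<beta>: "\<beta> \<in> S" "x = \<beta> \<circ> t" using x unfolding cay_adj_def by blast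
      obtain \<gamma> where \<gamma>: "\<gamma> \<in> S" "x = \<gamma> \<circ> u" using x unfolding cay_adj_def by blast
      obtain p1 q1 where pq1: "p1 \<noteq> q1" "\<alpha> = transpose p1 q1" using trS \<alpha> by blast
      obtain r1 w1 where rw1: "r1 \<noteq> w1" "\<beta> = transpose r1 w1" using trS \<beta> by blast
      obtain r2 w2 where rw2: "r2 \<noteq> w2" "\<gamma> = transpose r2 w2" using trS \<gamma> by blast
      have an: "\<alpha> \<noteq> s" using x \<alpha> ss s by auto
      have o1: "\<alpha> = transpose b c \<or> \<alpha> = transpose a c"
        using F2[OF abc(1,2,3) pq1(1) rw1(1)] \<alpha> \<beta> pq1 rw1 abc an by metis
      have o2: "\<alpha> = transpose b e \<or> \<alpha> = transpose a e"
        using F2[OF abc(1) ea[symmetric] e(1)[symmetric] pq1(1) rw2(1)] \<alpha> \<gamma> pq1 rw2 abc an e by metis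
      have "transpose b c \<noteq> transpose b e" "transpose b c \<noteq> transpose a e"
           "transpose a c \<noteq> transpose b e" "transpose a c \<noteq> transpose a e"
        using abc e ea ec by (simp_all add: tr_eq doubleton_eq_iff)
      then show False using o1 o2 by metis
    qed
    moreover have "mv s \<inter> mv t \<inter> mv u \<noteq> {}" using mvs True by auto
    ultimately show ?thesis by simp
  qed
qed

end


lemma two_inter:
  assumes "A = {a,b}" "a\<noteq>b" "B = {c,d}" "c\<noteq>d" "A \<noteq> B" "A \<inter> B \<noteq> {}"
  shows "\<exists>w. A \<inter> B = {w}"
  using assms by auto

lemma two_eq:
  assumes "A = {a,b}" "a\<noteq>b" "x \<in> A" "y \<in> A" "x \<noteq> y"
  shows "A = {x,y}"
  using assms by auto

lemma recon:
  fixes ends :: "'e \<Rightarrow> 'v set" and F F' :: "'e set" and \<phi> :: "'e \<Rightarrow> 'e"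
  assumes finV: "finite V"
    and twoF: "\<And>e. e \<in> F \<Longrightarrow> \<exists>a\<in>V. \<exists>b\<in>V. a \<noteq> b \<and> ends e = {a,b}"
    and twoF': "\<And>e. e \<in> F' \<Longrightarrow> \<exists>a\<in>V. \<exists>b\<in>V. a \<noteq> b \<and> ends e = {a,b}"
    and injF: "inj_on ends F" and injF': "inj_on ends F'"
    and bij: "bij_betw \<phi> F F'"
    and P1: "\<And>e f. e \<in> F \<Longrightarrow> f \<in> F \<Longrightarrow> (ends e \<inter> ends f \<noteq> {}) = (ends (\<phi> e) \<inter> ends (\<phi> f) \<noteq> {})"
    and P2: "\<And>e f g. e \<in> F \<Longrightarrow> f \<in> F \<Longrightarrow> g \<in> F \<Longrightarrow> e \<noteq> f \<Longrightarrow> e \<noteq> g \<Longrightarrow> f \<noteq> g \<Longrightarrow>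
              ends e \<inter> ends f \<noteq> {} \<Longrightarrow> ends e \<inter> ends g \<noteq> {} \<Longrightarrow> ends f \<inter> ends g \<noteq> {} \<Longrightarrow>
              (ends e \<inter> ends f \<inter> ends g = {}) = (ends (\<phi> e) \<inter> ends (\<phi> f) \<inter> ends (\<phi> g) = {})"
    and deg1: "\<And>v. v \<in> V \<Longrightarrow> \<exists>e\<in>F. v \<in> ends e"
    and deg2: "\<And>e. e \<in> F \<Longrightarrow> \<exists>v\<in>ends e. \<exists>f\<in>F. f \<noteq> e \<and> v \<in> ends f"
  shows "\<exists>\<sigma>. bij_betw \<sigma> V V \<and> (\<forall>e\<in>F. ends (\<phi> e) = \<sigma> ` ends e)"
proof -
  have \<phi>F: "\<And>e. e \<in> F \<Longrightarrow> \<phi> e \<in> F'" using bij bij_betwE by blast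
  have \<phi>inj: "\<And>e f. e \<in> F \<Longrightarrow> f \<in> F \<Longrightarrow> \<phi> e = \<phi> f \<Longrightarrow> e = f"
    using bij by (meson bij_betw_def inj_onD)
  have twoE: "ends e = {x,y}" if hh: "e \<in> F" "x \<in> ends e" "y \<in> ends e" "x \<noteq> y" for e x y
  proof -
    obtain p q where "ends e = {p,q}" "p \<noteq> q" using twoF hh(1) by blast
    then show ?thesis using hh two_eq by metis
  qed
  have endsV: "\<And>e. e \<in> F \<Longrightarrow> ends (\<phi> e) \<subseteq> V" using twoF' \<phi>F by fastforce
  have single': "\<exists>w. ends (\<phi> e) \<inter> ends (\<phi> f) = {w}"
    if hh: "e \<in> F" "f \<in> F" "e \<noteq> f" "ends (\<phi> e) \<inter> ends (\<phi> f) \<noteq> {}" for e f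
  proof -
    obtain a b where ab: "ends (\<phi> e) = {a,b}" "a \<noteq> b" using twoF' \<phi>F hh by blast
    obtain c d where cd: "ends (\<phi> f) = {c,d}" "c \<noteq> d" using twoF' \<phi>F hh by blast
    have "ends (\<phi> e) \<noteq> ends (\<phi> f)" using injF' \<phi>F hh \<phi>inj by (metis inj_onD)
    then show ?thesis using two_inter[OF ab cd] hh by blast
  qed
  have single: "\<exists>w. ends e \<inter> ends f = {w}"
    if hh: "e \<in> F" "f \<in> F" "e \<noteq> f" "ends e \<inter> ends f \<noteq> {}" for e f
  proof -
    obtain a b where ab: "ends e = {a,b}" "a \<noteq> b" using twoF hh by blast
    obtain c d where cd: "ends f = {c,d}" "c \<noteq> d" using twoF hh by blast
    have "ends e \<noteq> ends f" using injF hh by (metis inj_onD)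
    then show ?thesis using two_inter[OF ab cd] hh by blast
  qed
  define big where "big v \<longleftrightarrow> (\<exists>e\<in>F. \<exists>f\<in>F. e \<noteq> f \<and> v \<in> ends e \<and> v \<in> ends f)" for v
  define A where "A v w \<longleftrightarrow> (\<forall>e\<in>F. v \<in> ends e \<longrightarrow> w \<in> ends (\<phi> e))" for v w
  define B where "B v w \<longleftrightarrow> (\<forall>e\<in>F. \<forall>u\<in>ends e. \<forall>f\<in>F. v \<in> ends e \<longrightarrow> u \<noteq> v \<longrightarrow> f \<noteq> e \<longrightarrow> u \<in> ends f
      \<longrightarrow> w \<notin> ends (\<phi> f))" for v w
  have step1: "\<exists>w. A v w" if hh: "big v" for v
  proof -
    obtain e1 e2 where e: "e1 \<in> F" "e2 \<in> F" "e1 \<noteq> e2" "v \<in> ends e1" "v \<in> ends e2"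
      using \<open>big v\<close> big_def by blast
    have "ends (\<phi> e1) \<inter> ends (\<phi> e2) \<noteq> {}" using P1[of e1 e2] e by blast
    then obtain w where w: "ends (\<phi> e1) \<inter> ends (\<phi> e2) = {w}" using single' e by blast
    have "w \<in> ends (\<phi> g)" if g: "g \<in> F" "v \<in> ends g" for g
    proof (cases "g = e1 \<or> g = e2")
      case True then show ?thesis using w by blast
    next
      case False
      have "ends (\<phi> e1) \<inter> ends (\<phi> e2) \<inter> ends (\<phi> g) \<noteq> {}"
        using P2[of e1 e2 g] e g False by blast
      then show ?thesis using w by auto
    qed
    then show ?thesis unfolding A_def by blast
  qed
  have lift: "v \<in> ends g" if hh: "big v" "A v w" "g \<in> F" "w \<in> ends (\<phi> g)" for v w g
  proof -
    obtain e1 e2 where e: "e1 \<in> F" "e2 \<in> F" "e1 \<noteq> e2" "v \<in> ends e1" "v \<in> ends e2"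
      using \<open>big v\<close> big_def by blast
    obtain z where z: "ends e1 \<inter> ends e2 = {z}" using single e by blast
    have vz: "ends e1 \<inter> ends e2 = {v}" using z e by auto
    show ?thesis
    proof (cases "g = e1 \<or> g = e2")
      case True then show ?thesis using e by blast
    next
      case False
      have w1: "w \<in> ends (\<phi> e1)" "w \<in> ends (\<phi> e2)" using \<open>A v w\<close> e unfolding A_def by auto
      have i1: "ends e1 \<inter> ends g \<noteq> {}" using P1[of e1 g] w1 hh e by blast
      have i2: "ends e2 \<inter> ends g \<noteq> {}" using P1[of e2 g] w1 hh e by blast
      have "ends e1 \<inter> ends e2 \<inter> ends g \<noteq> {}"
        using P2[of e1 e2 g] e hh False i1 i2 w1 by blast
      then show ?thesis using vz by auto
    qed
  qed
  have step3: "\<exists>w\<in>V. A v w \<and> B v w" if hh: "v \<in> V" for v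
  proof (cases "big v")
    case True
    then obtain w where w: "A v w" using step1 by blast
    obtain e where e: "e \<in> F" "v \<in> ends e" using deg1 hh by blast
    have wV: "w \<in> V" using w e endsV unfolding A_def by blast
    have "B v w" unfolding B_def
    proof (intro ballI impI)
      fix e u f assume h: "e \<in> F" "u \<in> ends e" "f \<in> F" "v \<in> ends e" "u \<noteq> v" "f \<noteq> e" "u \<in> ends f"
      show "w \<notin> ends (\<phi> f)"
      proof
        assume "w \<in> ends (\<phi> f)"
        then have vf: "v \<in> ends f" using lift[OF True w h(3)] by blast
        obtain a b where ab: "ends e = {a,b}" "a \<noteq> b" using twoF h by blast
        obtain c d where cd: "ends f = {c,d}" "c \<noteq> d" using twoF h by blast
        have "ends e = ends f" using ab cd h vf by auto
        then show False using injF h by (metis inj_onD)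
      qed
    qed
    then show ?thesis using wV w by blast
  next
    case False
    obtain e where e: "e \<in> F" "v \<in> ends e" using deg1 hh by blast
    have uniq: "\<And>e'. e' \<in> F \<Longrightarrow> v \<in> ends e' \<Longrightarrow> e' = e" using False e big_def by blast
    obtain x f where xf: "x \<in> ends e" "f \<in> F" "f \<noteq> e" "x \<in> ends f" using deg2 e by blast
    have xv: "x \<noteq> v" using uniq xf by blast
    have bigx: "big x" using xf e big_def by blast
    obtain wx where wx: "A x wx" using step1 bigx by blast
    have wxe: "wx \<in> ends (\<phi> e)" using wx e xf unfolding A_def by blast
    obtain a b where ab: "ends (\<phi> e) = {a,b}" "a \<noteq> b" "a \<in> V" "b \<in> V" using twoF' \<phi>F e by blast
    obtain w where w: "w \<in> ends (\<phi> e)" "w \<noteq> wx" "w \<in> V" using ab wxe by auto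
    have "A v w" unfolding A_def using uniq w by blast
    moreover have "B v w" unfolding B_def
    proof (intro ballI impI)
      fix e' u f' assume h: "e' \<in> F" "u \<in> ends e'" "f' \<in> F" "v \<in> ends e'" "u \<noteq> v" "f' \<noteq> e'" "u \<in> ends f'"
      have ee: "e' = e" using uniq h by blast
      obtain c d where cd: "ends e = {c,d}" "c \<noteq> d" using twoF e by blast
      have ux: "u = x" using cd h ee e xf xv by auto
      have wxf: "wx \<in> ends (\<phi> f')" using wx h ux unfolding A_def by blast
      obtain z where z: "ends (\<phi> e) \<inter> ends (\<phi> f') = {z}"
        using single'[of e f'] h ee e wxe wxf by blast
      show "w \<notin> ends (\<phi> f')" using z wxe wxf w by (metis IntI singletonD)
    qed
    ultimately show ?thesis using w by blast
  qed
  define \<sigma> where "\<sigma> v = (SOME w. w \<in> V \<and> A v w \<and> B v w)" for v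
  have \<sigma>: "\<sigma> v \<in> V \<and> A v (\<sigma> v) \<and> B v (\<sigma> v)" if hh: "v \<in> V" for v
    unfolding \<sigma>_def using step3[OF hh] by (metis (mono_tags, lifting) someI_ex)
  have sep: "\<sigma> y \<noteq> \<sigma> x" if hh: "e \<in> F" "ends e = {x,y}" "x \<noteq> y" "x \<in> V" "y \<in> V"
      "f \<in> F" "f \<noteq> e" "x \<in> ends f" for e x y f
  proof -
    have "\<sigma> x \<in> ends (\<phi> f)" using \<sigma>[OF hh(4)] hh unfolding A_def by blast
    moreover have "\<sigma> y \<notin> ends (\<phi> f)" using \<sigma>[OF hh(5)] hh unfolding B_def by blast
    ultimately show ?thesis by metis
  qed
  have edge: "\<sigma> a \<noteq> \<sigma> b \<and> ends (\<phi> e) = {\<sigma> a, \<sigma> b}"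
    if hh: "e \<in> F" "ends e = {a,b}" "a \<noteq> b" "a \<in> V" "b \<in> V" for e a b
  proof -
    obtain x f where xf: "x \<in> ends e" "f \<in> F" "f \<noteq> e" "x \<in> ends f" using deg2 hh by blast
    have ne: "\<sigma> a \<noteq> \<sigma> b"
    proof (cases "x = a")
      case True then show ?thesis using sep[of e a b f] hh xf by metis
    next
      case False then have "x = b" using xf hh by blast
      then show ?thesis using sep[of e b a f] hh xf by (metis insert_commute)
    qed
    have "\<sigma> a \<in> ends (\<phi> e)" "\<sigma> b \<in> ends (\<phi> e)" using \<sigma> hh unfolding A_def by auto
    moreover obtain c d where "ends (\<phi> e) = {c,d}" "c \<noteq> d" using twoF' \<phi>F hh by blast
    ultimately show ?thesis using ne two_eq by metis
  qed
  have inj: "inj_on \<sigma> V"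
  proof (rule inj_onI, rule ccontr)
    fix a b assume ab: "a \<in> V" "b \<in> V" "\<sigma> a = \<sigma> b" "a \<noteq> b"
    have bigcase: False if hh: "big a" "a \<in> V" "b \<in> V" "\<sigma> a = \<sigma> b" "a \<noteq> b" for a b
    proof -
      obtain f where f: "f \<in> F" "b \<in> ends f" using deg1 hh by blast
      have "\<sigma> a \<in> ends (\<phi> f)" using \<sigma>[OF hh(3)] f hh unfolding A_def by auto
      then have "a \<in> ends f" using lift[OF hh(1)] \<sigma>[OF hh(2)] f by blast
      moreover obtain p q where "ends f = {p,q}" "p \<noteq> q" using twoF f by blast
      ultimately have "ends f = {a,b}" using f hh two_eq by metis
      then show False using edge[OF f(1) _ hh(5,2,3)] hh by blast
    qed
    show False
    proof (cases "big a \<or> big b")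
      case True then show False using bigcase ab by metis
    next
      case False
      obtain e where e: "e \<in> F" "a \<in> ends e" using deg1 ab by blast
      obtain f where f: "f \<in> F" "b \<in> ends f" using deg1 ab by blast
      have ua: "\<And>e'. e' \<in> F \<Longrightarrow> a \<in> ends e' \<Longrightarrow> e' = e" using False e big_def by blast
      have ub: "\<And>e'. e' \<in> F \<Longrightarrow> b \<in> ends e' \<Longrightarrow> e' = f" using False f big_def by blast
      have "\<sigma> a \<in> ends (\<phi> e)" using \<sigma>[OF ab(1)] e unfolding A_def by blast
      moreover have "\<sigma> b \<in> ends (\<phi> f)" using \<sigma>[OF ab(2)] f unfolding A_def by blast
      ultimately
      have "ends e \<inter> ends f \<noteq> {}" using P1[OF e(1) f(1)] ab by auto
      then obtain c where c: "c \<in> ends e" "c \<in> ends f" by blast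
      show False
      proof (cases "e = f")
        case True
        then have "ends e = {a,b}" using twoE e f ab by blast
        then show False using edge[OF e(1) _ ab(4,1,2)] ab by blast
      next
        case ef: False
        have ca: "c \<noteq> a" using ua c f ef by metis
        have cb: "c \<noteq> b" using ub c e ef by metis
        have cV: "c \<in> V" using twoF[OF e(1)] c by auto
        have ee: "ends e = {a,c}" using twoE e c ca by metis
        have ff: "ends f = {b,c}" using twoE f c cb by metis
        have E1: "\<sigma> a \<noteq> \<sigma> c" "ends (\<phi> e) = {\<sigma> a, \<sigma> c}" using edge[OF e(1) ee ca[symmetric] ab(1) cV] by auto
        have E2: "ends (\<phi> f) = {\<sigma> b, \<sigma> c}" using edge[OF f(1) ff cb[symmetric] ab(2) cV] by auto
        have "ends (\<phi> e) = ends (\<phi> f)" using E1 E2 ab by simp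
        then have "\<phi> e = \<phi> f" using injF' \<phi>F e f by (metis inj_onD)
        then show False using \<phi>inj e f ef by blast
      qed
    qed
  qed
  have img: "\<sigma> ` V = V" using endo_inj_surj[OF finV _ inj] \<sigma> by blast
  have "bij_betw \<sigma> V V" using inj img by (simp add: bij_betw_def)
  moreover have "\<forall>e\<in>F. ends (\<phi> e) = \<sigma> ` ends e"
  proof
    fix e assume e: "e \<in> F"
    obtain a b where ab: "a \<in> V" "b \<in> V" "a \<noteq> b" "ends e = {a,b}" using twoF e by blast
    show "ends (\<phi> e) = \<sigma> ` ends e" using edge[OF e ab(4,3,1,2)] ab by simp
  qed
  ultimately show ?thesis by blast
qed


definition isoP :: "'a set \<Rightarrow> ('a \<Rightarrow> 'a \<Rightarrow> bool) \<Rightarrow> 'b set \<Rightarrow> ('b \<Rightarrow> 'b \<Rightarrow> bool) \<Rightarrow> ('a \<Rightarrow> 'b) \<Rightarrow> bool" where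
  "isoP A E B E' f \<longleftrightarrow> bij_betw f A B \<and> (\<forall>x\<in>A. \<forall>y\<in>A. E x y \<longleftrightarrow> E' (f x) (f y))"

lemma graph_iso_isoP: "graph_iso A E B E' \<longleftrightarrow> (\<exists>f. isoP A E B E' f)"
  unfolding graph_iso_def isoP_def by blast

lemma graph_aut_isoP: "graph_aut A E g \<longleftrightarrow> isoP A E A E g"
  unfolding graph_aut_def isoP_def by blast

lemma iso_comp: "isoP A E B E' f \<Longrightarrow> isoP B E' C E'' g \<Longrightarrow> isoP A E C E'' (g \<circ> f)"
proof -
  assume f: "isoP A E B E' f" and g: "isoP B E' C E'' g"
  have "bij_betw (g \<circ> f) A C" using f g bij_betw_trans unfolding isoP_def by blast
  moreover have "\<forall>x\<in>A. \<forall>y\<in>A. E x y \<longleftrightarrow> E'' ((g \<circ> f) x) ((g \<circ> f) y)"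
  proof (intro ballI)
    fix x y assume "x \<in> A" "y \<in> A"
    moreover have "f x \<in> B" "f y \<in> B" using f calculation unfolding isoP_def by (auto dest: bij_betwE)
    ultimately show "E x y \<longleftrightarrow> E'' ((g \<circ> f) x) ((g \<circ> f) y)" using f g unfolding isoP_def by simp
  qed
  ultimately show ?thesis unfolding isoP_def by blast
qed

lemma Sym_comp: "p \<in> Sym n \<Longrightarrow> q \<in> Sym n \<Longrightarrow> p \<circ> q \<in> Sym n"
  unfolding Sym_def by (auto intro: permutes_compose)

lemma Sym_inv: "p \<in> Sym n \<Longrightarrow> inv p \<in> Sym n"
  unfolding Sym_def by (auto intro: permutes_inv)

lemma Sym_id: "id \<in> Sym n"
  unfolding Sym_def by (auto intro: permutes_id)

lemma rmul: assumes p: "p \<in> Sym n"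
  shows "isoP (Sym n) (cay_adj S) (Sym n) (cay_adj S) (\<lambda>h. h \<circ> p)"
proof -
  have pp: "p \<circ> inv p = id" "inv p \<circ> p = id" using p unfolding Sym_def by (auto intro: permutes_inv_o)
  have "bij_betw (\<lambda>h. h \<circ> p) (Sym n) (Sym n)"
  proof (rule bij_betw_byWitness[where f'="\<lambda>h. h \<circ> inv p"])
    show "\<forall>a\<in>Sym n. a \<circ> p \<circ> inv p = a" using pp by (simp add: o_assoc[symmetric])
    show "\<forall>a\<in>Sym n. a \<circ> inv p \<circ> p = a" using pp by (simp add: o_assoc[symmetric])
    show "(\<lambda>h. h \<circ> p) ` Sym n \<subseteq> Sym n" using Sym_comp p by blast
    show "(\<lambda>h. h \<circ> inv p) ` Sym n \<subseteq> Sym n" using Sym_comp Sym_inv p by blast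
  qed
  moreover have "cay_adj S x y \<longleftrightarrow> cay_adj S (x \<circ> p) (y \<circ> p)" for x y
  proof -
    have "y = s \<circ> x \<longleftrightarrow> y \<circ> p = s \<circ> x \<circ> p" for s
    proof
      assume "y \<circ> p = s \<circ> x \<circ> p"
      then have "y \<circ> p \<circ> inv p = s \<circ> x \<circ> p \<circ> inv p" by simp
      then show "y = s \<circ> x" using pp by (simp add: o_assoc[symmetric])
    qed simp
    then show ?thesis unfolding cay_adj_def by (simp add: o_assoc)
  qed
  ultimately show ?thesis unfolding isoP_def by blast
qed

lemma bex_bij: "bij_betw \<phi> A B \<Longrightarrow> (\<exists>x\<in>B. P x) = (\<exists>x\<in>A. P (\<phi> x))"
  by (auto simp: bij_betw_def)
lemma ball_bij: "bij_betw \<phi> A B \<Longrightarrow> (\<forall>x\<in>B. P x) = (\<forall>x\<in>A. P (\<phi> x))"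
  by (auto simp: bij_betw_def)

lemma transfer:
  assumes iso: "isoP (Sym n) (cay_adj S) (Sym n) (cay_adj S') \<phi>" and fid: "\<phi> id = id"
    and s: "s \<in> Sym n" and t: "t \<in> Sym n" and u: "u \<in> Sym n"
  shows "DisjP n S s t \<longleftrightarrow> DisjP n S' (\<phi> s) (\<phi> t)"
    and "TriP n S s t u \<longleftrightarrow> TriP n S' (\<phi> s) (\<phi> t) (\<phi> u)"
proof -
  have bij: "bij_betw \<phi> (Sym n) (Sym n)" and adj: "\<And>x y. x \<in> Sym n \<Longrightarrow> y \<in> Sym n \<Longrightarrow> cay_adj S x y = cay_adj S' (\<phi> x) (\<phi> y)"
    using iso unfolding isoP_def by auto
  have eqq: "\<And>x y. x \<in> Sym n \<Longrightarrow> y \<in> Sym n \<Longrightarrow> \<phi> x = \<phi> y \<longleftrightarrow> x = y"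
    using inj_on_eq_iff[OF bij_betw_imp_inj_on[OF bij]] by blast
  have idq: "\<And>x. x \<in> Sym n \<Longrightarrow> \<phi> x = id \<longleftrightarrow> x = id" using eqq[OF _ Sym_id] fid by force
  have img: "\<And>x. x \<in> Sym n \<Longrightarrow> \<phi> x \<in> Sym n" using bij bij_betwE by blast
  have sur: "\<And>y. y \<in> Sym n \<Longrightarrow> \<exists>x\<in>Sym n. y = \<phi> x"
    using bij_betw_imp_surj_on[OF bij] by blast
  show "DisjP n S s t \<longleftrightarrow> DisjP n S' (\<phi> s) (\<phi> t)"
  proof
    assume "DisjP n S s t"
    then obtain x where x: "x \<in> Sym n" "x \<noteq> id" "cay_adj S s x" "cay_adj S t x"
      and xu: "\<And>y. y \<in> Sym n \<Longrightarrow> y \<noteq> id \<Longrightarrow> cay_adj S s y \<Longrightarrow> cay_adj S t y \<Longrightarrow> y = x"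
      unfolding DisjP_def by blast
    have "y' = \<phi> x" if y': "y' \<in> Sym n" "y' \<noteq> id" "cay_adj S' (\<phi> s) y'" "cay_adj S' (\<phi> t) y'" for y'
    proof -
      obtain y where y: "y \<in> Sym n" "y' = \<phi> y" using sur y'(1) by blast
      have "y = x" using xu[OF y(1)] y y' idq adj s t by auto
      then show ?thesis using y by simp
    qed
    moreover have "\<phi> x \<in> Sym n" "\<phi> x \<noteq> id" "cay_adj S' (\<phi> s) (\<phi> x)" "cay_adj S' (\<phi> t) (\<phi> x)"
      using x img idq adj s t by auto
    ultimately show "DisjP n S' (\<phi> s) (\<phi> t)" unfolding DisjP_def by metis
  next
    assume "DisjP n S' (\<phi> s) (\<phi> t)"
    then obtain x' where x': "x' \<in> Sym n" "x' \<noteq> id" "cay_adj S' (\<phi> s) x'" "cay_adj S' (\<phi> t) x'"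
      and xu: "\<And>y. y \<in> Sym n \<Longrightarrow> y \<noteq> id \<Longrightarrow> cay_adj S' (\<phi> s) y \<Longrightarrow> cay_adj S' (\<phi> t) y \<Longrightarrow> y = x'"
      unfolding DisjP_def by blast
    obtain x where x: "x \<in> Sym n" "x' = \<phi> x" using sur x'(1) by blast
    have "y = x" if y: "y \<in> Sym n" "y \<noteq> id" "cay_adj S s y" "cay_adj S t y" for y
    proof -
      have "\<phi> y = \<phi> x" using xu[OF img[OF y(1)]] y x idq adj s t by auto
      then show ?thesis using eqq y x by blast
    qed
    moreover have "x \<noteq> id" "cay_adj S s x" "cay_adj S t x" using x x' idq adj s t by auto
    ultimately show "DisjP n S s t" unfolding DisjP_def using x(1) by metis
  qed
  show "TriP n S s t u \<longleftrightarrow> TriP n S' (\<phi> s) (\<phi> t) (\<phi> u)"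
  proof
    assume "TriP n S s t u"
    then obtain x where x: "x \<in> Sym n" "x \<noteq> id" "cay_adj S s x" "cay_adj S t x" "cay_adj S u x"
      unfolding TriP_def by blast
    then show "TriP n S' (\<phi> s) (\<phi> t) (\<phi> u)" unfolding TriP_def
      using img idq adj s t u by (metis)
  next
    assume "TriP n S' (\<phi> s) (\<phi> t) (\<phi> u)"
    then obtain x' where x': "x' \<in> Sym n" "x' \<noteq> id" "cay_adj S' (\<phi> s) x'" "cay_adj S' (\<phi> t) x'" "cay_adj S' (\<phi> u) x'"
      unfolding TriP_def by blast
    obtain x where x: "x \<in> Sym n" "x' = \<phi> x" using sur x'(1) by blast
    have "x \<noteq> id" "cay_adj S s x" "cay_adj S t x" "cay_adj S u x" using x x' idq adj s t u by auto
    then show "TriP n S s t u" unfolding TriP_def using x(1) by blast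
  qed
qed

context TS begin

lemma gen_inv:
  assumes A: "\<forall>s\<in>S. \<forall>x\<in>A. s x \<in> A" and g: "g \<in> generated S"
  shows "\<forall>x\<in>A. g x \<in> A"
  using g
proof induction
  case gen_id then show ?case by simp
next
  case (gen_mult s g)
  show ?case
  proof
    fix x assume "x \<in> A"
    then have "g x \<in> A" using gen_mult.IH by blast
    then show "(s \<circ> g) x \<in> A" using A gen_mult.hyps(1) by simp
  qed
next
  case (gen_inv_mult s g)
  obtain i j where ij: "s = transpose i j" using trS gen_inv_mult.hyps(1) by blast
  have si: "inv s = s" unfolding ij by simp
  show ?case
  proof
    fix x assume "x \<in> A"
    then have "g x \<in> A" using gen_inv_mult.IH by blast
    then show "(inv s \<circ> g) x \<in> A" using A gen_inv_mult.hyps(1) si by simp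
  qed
qed

lemma deg1:
  assumes n: "n \<ge> 2" and gen: "generates_Sym n S" and v: "v \<in> {1..n}"
  shows "\<exists>s\<in>S. v \<in> mv s"
proof (rule ccontr)
  assume "\<not> ?thesis"
  then have fx: "\<forall>s\<in>S. \<forall>x\<in>{v}. s x \<in> {v}" unfolding mv_def by auto
  obtain w where w: "w \<in> {1..n}" "w \<noteq> v"
  proof (cases "v = 1")
    case True then show ?thesis using that[of 2] n by auto
  next
    case False then show ?thesis using that[of 1] n by auto
  qed
  have "transpose v w \<in> Sym n" using v w unfolding Sym_def by (simp add: permutes_swap_id)
  then have "transpose v w \<in> generated S" using gen unfolding generates_Sym_def by simp
  then have "transpose v w v = v" using gen_inv[OF fx] by blast
  then show False using w by simp
qed

lemma deg2:
  assumes n: "n \<ge> 3" and gen: "generates_Sym n S" and s: "s \<in> S"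
  shows "\<exists>v\<in>mv s. \<exists>t\<in>S. t \<noteq> s \<and> v \<in> mv t"
proof (rule ccontr)
  assume H: "\<not> ?thesis"
  obtain a b where ab: "a \<in> {1..n}" "b \<in> {1..n}" "a \<noteq> b" "s = transpose a b" using trS s by blast
  have mvs: "mv s = {a,b}" using ab mv_tr by simp
  have fx: "\<forall>t\<in>S. \<forall>x\<in>{a,b}. t x \<in> {a,b}"
  proof (intro ballI)
    fix t x assume t: "t \<in> S" and x: "x \<in> {a,b}"
    show "t x \<in> {a,b}"
    proof (cases "t = s")
      case True then show ?thesis using ab x by auto
    next
      case False then have "x \<notin> mv t" using H mvs x t by blast
      then show ?thesis using x unfolding mv_def by auto
    qed
  qed
  obtain c where c: "c \<in> {1..n}" "c \<noteq> a" "c \<noteq> b"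
  proof (cases "a \<noteq> 1 \<and> b \<noteq> 1")
    case True then show ?thesis using that[of 1] n by auto
  next
    case F1: False
    show ?thesis
    proof (cases "a \<noteq> 2 \<and> b \<noteq> 2")
      case True then show ?thesis using that[of 2] n by auto
    next
      case False then show ?thesis using that[of 3] n F1 by auto
    qed
  qed
  have "transpose a c \<in> Sym n" using ab c unfolding Sym_def by (simp add: permutes_swap_id)
  then have "transpose a c \<in> generated S" using gen unfolding generates_Sym_def by simp
  then have "transpose a c a \<in> {a,b}" using gen_inv[OF fx] by blast
  then show False using c by simp
qed

lemma mv_two: "s \<in> S \<Longrightarrow> \<exists>a\<in>{1..n}. \<exists>b\<in>{1..n}. a \<noteq> b \<and> mv s = {a,b}"
  proof -
  assume "s \<in> S"
  then obtain a b where "a \<in> {1..n}" "b \<in> {1..n}" "a \<noteq> b" "s = transpose a b" using trS by blast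
  then show ?thesis using mv_tr by blast
qed

lemma inj_mv: "inj_on mv S"
proof (rule inj_onI)
  fix s t assume "s \<in> S" "t \<in> S" "mv s = mv t"
  obtain i j where ij: "i \<noteq> j" "s = transpose i j" using trS \<open>s \<in> S\<close> by blast
  obtain k l where kl: "k \<noteq> l" "t = transpose k l" using trS \<open>t \<in> S\<close> by blast
  have "{i,j} = {k,l}" using \<open>mv s = mv t\<close> ij kl mv_tr[OF ij(1)] mv_tr[OF kl(1)] by simp
  then show "s = t" using tr_eq[OF ij(1) kl(1)] ij kl by simp
qed

end

lemma M:
  assumes n: "n \<ge> 5" and T1: "TS n S" and gen: "generates_Sym n S" and T2: "TS n S'"
    and iso: "isoP (Sym n) (cay_adj S) (Sym n) (cay_adj S') \<phi>" and fid: "\<phi> id = id"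
  shows "\<exists>\<sigma>. bij_betw \<sigma> {1..n} {1..n} \<and>
     (\<forall>i\<in>{1..n}. \<forall>j\<in>{1..n}. trans_adj S i j \<longleftrightarrow> trans_adj S' (\<sigma> i) (\<sigma> j)) \<and>
     (\<forall>s\<in>S. mv (\<phi> s) = \<sigma> ` mv s)"
proof -
  interpret A: TS n S by fact
  interpret B: TS n S' by fact
  have bij: "bij_betw \<phi> (Sym n) (Sym n)" and adj: "\<And>x y. x \<in> Sym n \<Longrightarrow> y \<in> Sym n \<Longrightarrow> cay_adj S x y = cay_adj S' (\<phi> x) (\<phi> y)"
    using iso unfolding isoP_def by auto
  have cid: "\<And>S x. cay_adj S id x \<longleftrightarrow> x \<in> S" unfolding cay_adj_def by auto
  have inS: "x \<in> S \<longleftrightarrow> \<phi> x \<in> S'" if "x \<in> Sym n" for x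
    using adj[OF Sym_id that] fid cid by simp
  have bijS: "bij_betw \<phi> S S'"
  proof -
    have "inj_on \<phi> S" using inj_on_subset[OF bij_betw_imp_inj_on[OF bij]] A.S_Sym by blast
    moreover have "\<phi> ` S = S'"
    proof
      show "\<phi> ` S \<subseteq> S'" using inS A.S_Sym by blast
      show "S' \<subseteq> \<phi> ` S"
      proof
        fix y assume y: "y \<in> S'"
        then obtain x where "x \<in> Sym n" "y = \<phi> x" using B.S_Sym bij_betw_imp_surj_on[OF bij] by blast
        then show "y \<in> \<phi> ` S" using inS y by blast
      qed
    qed
    ultimately show ?thesis unfolding bij_betw_def by blast
  qed
  have \<phi>S: "\<And>s. s \<in> S \<Longrightarrow> \<phi> s \<in> S'" using bijS bij_betwE by blast
  have \<phi>inj: "\<And>s t. s \<in> S \<Longrightarrow> t \<in> S \<Longrightarrow> \<phi> s = \<phi> t \<Longrightarrow> s = t"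
    using inj_on_eq_iff[OF bij_betw_imp_inj_on[OF bijS]] by blast
  have mvne: "\<And>s. s \<in> S' \<Longrightarrow> mv s \<noteq> {}" using B.mv_two by fastforce
  have mvne': "\<And>s. s \<in> S \<Longrightarrow> mv s \<noteq> {}" using A.mv_two by fastforce
  have P1: "(mv s \<inter> mv t \<noteq> {}) = (mv (\<phi> s) \<inter> mv (\<phi> t) \<noteq> {})" if st: "s \<in> S" "t \<in> S" for s t
  proof (cases "s = t")
    case True then show ?thesis using mvne mvne' \<phi>S st by simp
  next
    case False
    have "\<phi> s \<noteq> \<phi> t" using \<phi>inj st False by blast
    then show ?thesis using A.G1[OF st False] B.G1[OF \<phi>S[OF st(1)] \<phi>S[OF st(2)]]
      transfer(1)[OF iso fid A.S_Sym[OF st(1)] A.S_Sym[OF st(2)] A.S_Sym[OF st(2)]] by blast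
  qed
  have P2: "(mv e \<inter> mv f \<inter> mv g = {}) = (mv (\<phi> e) \<inter> mv (\<phi> f) \<inter> mv (\<phi> g) = {})"
    if h: "e \<in> S" "f \<in> S" "g \<in> S" "e \<noteq> f" "e \<noteq> g" "f \<noteq> g"
       "mv e \<inter> mv f \<noteq> {}" "mv e \<inter> mv g \<noteq> {}" "mv f \<inter> mv g \<noteq> {}" for e f g
  proof -
    have d: "\<phi> e \<noteq> \<phi> f" "\<phi> e \<noteq> \<phi> g" "\<phi> f \<noteq> \<phi> g" using \<phi>inj h by blast+
    have i: "mv (\<phi> e) \<inter> mv (\<phi> f) \<noteq> {}" "mv (\<phi> e) \<inter> mv (\<phi> g) \<noteq> {}" "mv (\<phi> f) \<inter> mv (\<phi> g) \<noteq> {}"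
      using P1 h by blast+
    show ?thesis using A.G2[OF h] B.G2[OF \<phi>S[OF h(1)] \<phi>S[OF h(2)] \<phi>S[OF h(3)] d i]
      transfer(2)[OF iso fid A.S_Sym[OF h(1)] A.S_Sym[OF h(2)] A.S_Sym[OF h(3)]] by blast
  qed
  have d1: "\<And>v. v \<in> {1..n} \<Longrightarrow> \<exists>e\<in>S. v \<in> mv e" using A.deg1 gen n by auto
  have d2: "\<And>e. e \<in> S \<Longrightarrow> \<exists>v\<in>mv e. \<exists>f\<in>S. f \<noteq> e \<and> v \<in> mv f" using A.deg2 gen n by auto
  have "\<exists>\<sigma>. bij_betw \<sigma> {1..n} {1..n} \<and> (\<forall>e\<in>S. mv (\<phi> e) = \<sigma> ` mv e)"
    by (rule recon[OF finite_atLeastAtMost A.mv_two B.mv_two A.inj_mv B.inj_mv bijS P1 P2 d1 d2])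
  then obtain \<sigma> where \<sigma>: "bij_betw \<sigma> {1..n} {1..n}" "\<forall>s\<in>S. mv (\<phi> s) = \<sigma> ` mv s"
    by blast
  have \<sigma>inj: "\<And>x y. x \<in> {1..n} \<Longrightarrow> y \<in> {1..n} \<Longrightarrow> \<sigma> x = \<sigma> y \<longleftrightarrow> x = y"
    using inj_on_eq_iff[OF bij_betw_imp_inj_on[OF \<sigma>(1)]] by blast
  have "trans_adj S i j \<longleftrightarrow> trans_adj S' (\<sigma> i) (\<sigma> j)" if ij: "i \<in> {1..n}" "j \<in> {1..n}" for i j
  proof
    assume "trans_adj S i j"
    then have h: "i \<noteq> j" "transpose i j \<in> S" unfolding trans_adj_def by auto
    have ne: "\<sigma> i \<noteq> \<sigma> j" using \<sigma>inj ij h(1) by blast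
    obtain p q where pq: "p \<noteq> q" "\<phi> (transpose i j) = transpose p q" using B.trS \<phi>S[OF h(2)] by blast
    have e1: "mv (\<phi> (transpose i j)) = \<sigma> ` mv (transpose i j)" using \<sigma>(2) h(2) by blast
    then have "{p,q} = {\<sigma> i, \<sigma> j}" using pq(2) mv_tr[OF pq(1)] mv_tr[OF h(1)] by simp
    then have "\<phi> (transpose i j) = transpose (\<sigma> i) (\<sigma> j)" using pq(2) tr_eq[OF pq(1) ne] by simp
    then show "trans_adj S' (\<sigma> i) (\<sigma> j)" using \<phi>S[OF h(2)] ne unfolding trans_adj_def by simp
  next
    assume "trans_adj S' (\<sigma> i) (\<sigma> j)"
    then have h: "\<sigma> i \<noteq> \<sigma> j" "transpose (\<sigma> i) (\<sigma> j) \<in> S'" unfolding trans_adj_def by auto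
    have ne: "i \<noteq> j" using h(1) by blast
    have "transpose (\<sigma> i) (\<sigma> j) \<in> \<phi> ` S" using h(2) bij_betw_imp_surj_on[OF bijS] by simp
    then obtain s where s: "s \<in> S" "\<phi> s = transpose (\<sigma> i) (\<sigma> j)" by (metis imageE)
    obtain a b where ab: "a \<in> {1..n}" "b \<in> {1..n}" "a \<noteq> b" "s = transpose a b" using A.trS s by blast
    have e1: "mv (\<phi> s) = \<sigma> ` mv s" using \<sigma>(2) s(1) by blast
    then have "{\<sigma> i, \<sigma> j} = {\<sigma> a, \<sigma> b}" using s(2) ab(4) mv_tr[OF h(1)] mv_tr[OF ab(3)] by simp
    then have "{a,b} = {i,j}" using \<sigma>inj ab ij by (auto simp: doubleton_eq_iff)
    then have "s = transpose i j" using ab(4) tr_eq[OF ab(3) ne] by simp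
    then show "trans_adj S i j" using s ne unfolding trans_adj_def by auto
  qed
  then show ?thesis using \<sigma> by blast
qed



lemma conj_iso:
  assumes T1: "TS n S" and T2: "TS n S'" and \<sigma>: "bij_betw \<sigma> {1..n} {1..n}"
    and ta: "\<forall>i\<in>{1..n}. \<forall>j\<in>{1..n}. trans_adj S i j \<longleftrightarrow> trans_adj S' (\<sigma> i) (\<sigma> j)"
  shows "\<exists>p. p \<in> Sym n \<and> (\<forall>i\<in>{1..n}. p i = \<sigma> i) \<and> p \<circ> inv p = id \<and>
     isoP (Sym n) (cay_adj S) (Sym n) (cay_adj S') (\<lambda>h. p \<circ> h \<circ> inv p) \<and>
     (\<forall>i\<in>{1..n}. \<forall>j\<in>{1..n}. p \<circ> transpose i j \<circ> inv p = transpose (\<sigma> i) (\<sigma> j))"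
proof -
  interpret A: TS n S by fact
  interpret B: TS n S' by fact
  define V where "V = {1..n}"
  define p where "p x = (if x \<in> V then \<sigma> x else x)" for x
  have pV: "\<And>i. i \<in> V \<Longrightarrow> p i = \<sigma> i" unfolding p_def by simp
  have "bij_betw p V V" using \<sigma> unfolding V_def by (rule bij_betw_cong[THEN iffD1, rotated]) (simp add: p_def V_def)
  then have pp: "p permutes V" by (rule bij_imp_permutes) (simp add: p_def)
  then have pS: "p \<in> Sym n" unfolding Sym_def V_def by simp
  have pi: "p \<circ> inv p = id" "inv p \<circ> p = id" using pp by (auto intro: permutes_inv_o)
  have bp: "bij p" using pp by (rule permutes_bij)
  have conjT: "p \<circ> transpose i j \<circ> inv p = transpose (p i) (p j)" for i j
  proof -
    have "transpose (p i) (p j) \<circ> p = p \<circ> transpose (inv p (p i)) (inv p (p j))"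
      by (rule transpose_comp_eq[OF bp])
    also have "\<dots> = p \<circ> transpose i j" using permutes_inverses(2)[OF pp] by simp
    finally have "p \<circ> transpose i j \<circ> inv p = transpose (p i) (p j) \<circ> p \<circ> inv p" by simp
    also have "\<dots> = transpose (p i) (p j)" using pi by (simp add: o_assoc[symmetric])
    finally show ?thesis .
  qed
  define C where "C h = p \<circ> h \<circ> inv p" for h
  have Cmul: "C (a \<circ> b) = C a \<circ> C b" for a b
  proof -
    have "C a \<circ> C b = p \<circ> a \<circ> (inv p \<circ> p) \<circ> b \<circ> inv p" unfolding C_def by (simp add: o_assoc)
    then show ?thesis unfolding C_def using pi by (simp add: o_assoc)
  qed
  have Cinv: "inv p \<circ> C h \<circ> p = h" for h
  proof -
    have "inv p \<circ> C h \<circ> p = (inv p \<circ> p) \<circ> h \<circ> (inv p \<circ> p)" unfolding C_def by (simp add: o_assoc)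
    then show ?thesis using pi by simp
  qed
  have Cinj: "C a = C b \<Longrightarrow> a = b" for a b using Cinv by metis
  have bijC: "bij_betw C (Sym n) (Sym n)"
  proof (rule bij_betw_byWitness[where f'="\<lambda>h. inv p \<circ> h \<circ> p"])
    show "\<forall>a\<in>Sym n. inv p \<circ> C a \<circ> p = a" using Cinv by blast
    show "\<forall>a\<in>Sym n. C (inv p \<circ> a \<circ> p) = a"
    proof
      fix a
      have "C (inv p \<circ> a \<circ> p) = (p \<circ> inv p) \<circ> a \<circ> (p \<circ> inv p)" unfolding C_def by (simp add: o_assoc)
      then show "C (inv p \<circ> a \<circ> p) = a" using pi by simp
    qed
    show "C ` Sym n \<subseteq> Sym n" unfolding C_def using pS Sym_comp Sym_inv by blast
    show "(\<lambda>h. inv p \<circ> h \<circ> p) ` Sym n \<subseteq> Sym n" using pS Sym_comp Sym_inv by blast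
  qed
  have CT: "C (transpose i j) = transpose (\<sigma> i) (\<sigma> j)" if "i \<in> V" "j \<in> V" for i j
    unfolding C_def conjT using pV that by simp
  have adj: "cay_adj S x y \<longleftrightarrow> cay_adj S' (C x) (C y)" for x y
  proof
    assume "cay_adj S x y"
    then obtain s where s: "s \<in> S" "y = s \<circ> x" unfolding cay_adj_def by blast
    obtain i j where ij: "i \<in> V" "j \<in> V" "i \<noteq> j" "s = transpose i j" using A.trS s unfolding V_def by blast
    have "trans_adj S i j" using ij s unfolding trans_adj_def by simp
    then have "trans_adj S' (\<sigma> i) (\<sigma> j)" using ta ij unfolding V_def by blast
    then have "transpose (\<sigma> i) (\<sigma> j) \<in> S'" unfolding trans_adj_def by simp
    moreover have "C y = transpose (\<sigma> i) (\<sigma> j) \<circ> C x" using s ij Cmul CT by simp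
    ultimately show "cay_adj S' (C x) (C y)" unfolding cay_adj_def by blast
  next
    assume "cay_adj S' (C x) (C y)"
    then obtain r where r: "r \<in> S'" "C y = r \<circ> C x" unfolding cay_adj_def by blast
    obtain k l where kl: "k \<in> V" "l \<in> V" "k \<noteq> l" "r = transpose k l" using B.trS r unfolding V_def by blast
    obtain i where i: "i \<in> V" "k = \<sigma> i" using kl \<sigma> unfolding V_def by (metis bij_betw_imp_surj_on imageE)
    obtain j where j: "j \<in> V" "l = \<sigma> j" using kl \<sigma> unfolding V_def by (metis bij_betw_imp_surj_on imageE)
    have "trans_adj S' (\<sigma> i) (\<sigma> j)" using r kl i j unfolding trans_adj_def by simp
    then have "trans_adj S i j" using ta i j unfolding V_def by blast
    then have ts: "transpose i j \<in> S" unfolding trans_adj_def by simp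
    have "C y = C (transpose i j \<circ> x)" using r kl i j Cmul CT by simp
    then have "y = transpose i j \<circ> x" by (rule Cinj)
    then show "cay_adj S x y" using ts unfolding cay_adj_def by blast
  qed
  have "isoP (Sym n) (cay_adj S) (Sym n) (cay_adj S') C" unfolding isoP_def using bijC adj by blast
  then show ?thesis using pS pV pi(1) CT unfolding C_def V_def by blast
qed



lemma partA_fwd:
  assumes n: "n \<ge> 5" and T1: "TS n S" and g1: "generates_Sym n S" and T2: "TS n S'"
    and iso: "graph_iso (Sym n) (cay_adj S) (Sym n) (cay_adj S')"
  shows "graph_iso {1..n} (trans_adj S) {1..n} (trans_adj S')"
proof -
  obtain f where f: "isoP (Sym n) (cay_adj S) (Sym n) (cay_adj S') f" using iso graph_iso_isoP by blast
  define c where "c = f id"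
  have cS: "c \<in> Sym n" unfolding c_def using f Sym_id unfolding isoP_def by (blast dest: bij_betwE)
  have ic: "inv c \<in> Sym n" using Sym_inv cS by blast
  have ci: "c \<circ> inv c = id" using cS unfolding Sym_def by (auto intro: permutes_inv_o)
  define \<phi> where "\<phi> = (\<lambda>h. h \<circ> inv c) \<circ> f"
  have iso\<phi>: "isoP (Sym n) (cay_adj S) (Sym n) (cay_adj S') \<phi>"
    unfolding \<phi>_def by (rule iso_comp[OF f rmul[OF ic]])
  have "\<phi> id = id" unfolding \<phi>_def using ci c_def by simp
  then obtain \<sigma> where \<sigma>: "bij_betw \<sigma> {1..n} {1..n}"
     "\<forall>i\<in>{1..n}. \<forall>j\<in>{1..n}. trans_adj S i j \<longleftrightarrow> trans_adj S' (\<sigma> i) (\<sigma> j)"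
    using M[OF n T1 g1 T2 iso\<phi>] by blast
  then show ?thesis unfolding graph_iso_def by blast
qed

lemma partA_bwd:
  assumes T1: "TS n S" and T2: "TS n S'"
    and iso: "graph_iso {1..n} (trans_adj S) {1..n} (trans_adj S')"
  shows "graph_iso (Sym n) (cay_adj S) (Sym n) (cay_adj S')"
proof -
  obtain \<sigma> where \<sigma>: "bij_betw \<sigma> {1..n} {1..n}"
     "\<forall>i\<in>{1..n}. \<forall>j\<in>{1..n}. trans_adj S i j \<longleftrightarrow> trans_adj S' (\<sigma> i) (\<sigma> j)"
    using iso unfolding graph_iso_def by blast
  show ?thesis using conj_iso[OF T1 T2 \<sigma>] graph_iso_isoP by blast
qed

lemma partB_fwd:
  assumes n: "n \<ge> 5" and T1: "TS n S" and g1: "generates_Sym n S"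
    and et: "edge_transitive (Sym n) (cay_adj S)"
  shows "edge_transitive {1..n} (trans_adj S)"
  unfolding edge_transitive_def
proof (intro ballI impI)
  interpret A: TS n S by fact
  fix a b c d assume abcd: "a \<in> {1..n}" "b \<in> {1..n}" "c \<in> {1..n}" "d \<in> {1..n}"
    and e1: "trans_adj S a b" and e2: "trans_adj S c d"
  have ab: "a \<noteq> b" "transpose a b \<in> S" and cd: "c \<noteq> d" "transpose c d \<in> S"
    using e1 e2 unfolding trans_adj_def by auto
  define s where "s = transpose a b"
  define t where "t = transpose c d"
  have sS: "s \<in> Sym n" "t \<in> Sym n" using A.S_Sym ab cd s_def t_def by auto
  have "cay_adj S id s" "cay_adj S id t" using ab cd s_def t_def unfolding cay_adj_def by auto
  then obtain g where g: "graph_aut (Sym n) (cay_adj S) g" "{g id, g s} = {id, t}"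
    using et sS Sym_id unfolding edge_transitive_def by blast
  have gi: "isoP (Sym n) (cay_adj S) (Sym n) (cay_adj S) g" using g graph_aut_isoP by blast
  have tt: "t \<circ> t = id" unfolding t_def by simp
  obtain \<phi> where \<phi>: "isoP (Sym n) (cay_adj S) (Sym n) (cay_adj S) \<phi>" "\<phi> id = id" "\<phi> s = t"
  proof (cases "g id = id \<and> g s = t")
    case True then show ?thesis using that gi by blast
  next
    case False
    then have "g id = t" "g s = id" using g(2) by (auto simp: doubleton_eq_iff)
    moreover have "isoP (Sym n) (cay_adj S) (Sym n) (cay_adj S) ((\<lambda>h. h \<circ> t) \<circ> g)"
      by (rule iso_comp[OF gi rmul[OF sS(2)]])
    ultimately show ?thesis using that tt by simp
  qed
  obtain \<sigma> where \<sigma>: "bij_betw \<sigma> {1..n} {1..n}"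
     "\<forall>i\<in>{1..n}. \<forall>j\<in>{1..n}. trans_adj S i j \<longleftrightarrow> trans_adj S (\<sigma> i) (\<sigma> j)"
     "\<forall>s\<in>S. mv (\<phi> s) = \<sigma> ` mv s"
    using M[OF n T1 g1 T1 \<phi>(1,2)] by blast
  have "mv t = \<sigma> ` mv s" using \<sigma>(3) \<phi>(3) ab s_def by metis
  then have "{\<sigma> a, \<sigma> b} = {c, d}" using mv_tr[OF ab(1)] mv_tr[OF cd(1)] s_def t_def by simp
  moreover have "graph_aut {1..n} (trans_adj S) \<sigma>" unfolding graph_aut_def using \<sigma> by blast
  ultimately show "\<exists>g. graph_aut {1..n} (trans_adj S) g \<and> {g a, g b} = {c, d}" by blast
qed

lemma partB_bwd:
  assumes T1: "TS n S" and et: "edge_transitive {1..n} (trans_adj S)"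
  shows "edge_transitive (Sym n) (cay_adj S)"
  unfolding edge_transitive_def
proof (intro ballI impI)
  interpret A: TS n S by fact
  fix u v x y assume uvxy: "u \<in> Sym n" "v \<in> Sym n" "x \<in> Sym n" "y \<in> Sym n"
    and e1: "cay_adj S u v" and e2: "cay_adj S x y"
  obtain s where s: "s \<in> S" "v = s \<circ> u" using e1 unfolding cay_adj_def by blast
  obtain t where t: "t \<in> S" "y = t \<circ> x" using e2 unfolding cay_adj_def by blast
  obtain a b where ab: "a \<in> {1..n}" "b \<in> {1..n}" "a \<noteq> b" "s = transpose a b" using A.trS s by blast
  obtain c d where cd: "c \<in> {1..n}" "d \<in> {1..n}" "c \<noteq> d" "t = transpose c d" using A.trS t by blast
  have "trans_adj S a b" "trans_adj S c d" using ab cd s t unfolding trans_adj_def by auto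
  then obtain \<sigma> where \<sigma>: "graph_aut {1..n} (trans_adj S) \<sigma>" "{\<sigma> a, \<sigma> b} = {c, d}"
    using et ab cd unfolding edge_transitive_def by blast
  have \<sigma>b: "bij_betw \<sigma> {1..n} {1..n}"
     "\<forall>i\<in>{1..n}. \<forall>j\<in>{1..n}. trans_adj S i j \<longleftrightarrow> trans_adj S (\<sigma> i) (\<sigma> j)"
    using \<sigma>(1) unfolding graph_aut_def by auto
  obtain p where p: "p \<in> Sym n" "p \<circ> inv p = id"
     "isoP (Sym n) (cay_adj S) (Sym n) (cay_adj S) (\<lambda>h. p \<circ> h \<circ> inv p)"
     "\<forall>i\<in>{1..n}. \<forall>j\<in>{1..n}. p \<circ> transpose i j \<circ> inv p = transpose (\<sigma> i) (\<sigma> j)"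
    using conj_iso[OF T1 T1 \<sigma>b] by blast
  have iu: "inv u \<in> Sym n" using Sym_inv uvxy by blast
  have ui: "u \<circ> inv u = id" using uvxy unfolding Sym_def by (auto intro: permutes_inv_o)
  define g where "g = (\<lambda>h. h \<circ> x) \<circ> ((\<lambda>h. p \<circ> h \<circ> inv p) \<circ> (\<lambda>h. h \<circ> inv u))"
  have gi: "isoP (Sym n) (cay_adj S) (Sym n) (cay_adj S) g"
    unfolding g_def by (rule iso_comp[OF iso_comp[OF rmul[OF iu] p(3)] rmul[OF uvxy(3)]])
  have gu: "g u = x" unfolding g_def using ui p(2) by simp
  have s\<sigma>: "\<sigma> a \<noteq> \<sigma> b" using \<sigma>b(1) ab by (metis bij_betw_imp_inj_on inj_on_eq_iff)
  have "transpose (\<sigma> a) (\<sigma> b) = t" using tr_eq[OF s\<sigma> cd(3)] \<sigma>(2) cd(4) by simp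
  then have tt': "transpose (\<sigma> a) (\<sigma> b) \<circ> x = y" using t by simp
  have "g v = p \<circ> s \<circ> (u \<circ> inv u) \<circ> inv p \<circ> x" unfolding g_def using s(2) by (simp add: o_assoc)
  also have "\<dots> = (p \<circ> s \<circ> inv p) \<circ> x" using ui by (simp add: o_assoc)
  also have "\<dots> = transpose (\<sigma> a) (\<sigma> b) \<circ> x" using p(4) ab by simp
  finally have "g v = y" using tt' by simp
  then show "\<exists>g. graph_aut (Sym n) (cay_adj S) g \<and> {g u, g v} = {x, y}"
    using gi gu graph_aut_isoP by blast
qed

theorem theorem1:
  fixes n :: nat
  assumes "n \<ge> 5"
  shows "(\<forall>S S'. (\<forall>s\<in>S. is_transposition n s) \<and> generates_Sym n S \<and>
            (\<forall>s\<in>S'. is_transposition n s) \<and> generates_Sym n S' \<longrightarrow>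
            (graph_iso (Sym n) (cay_adj S) (Sym n) (cay_adj S') \<longleftrightarrow>
             graph_iso {1..n} (trans_adj S) {1..n} (trans_adj S')))
       \<and> (\<forall>S. (\<forall>s\<in>S. is_transposition n s) \<and> generates_Sym n S \<longrightarrow>
            (edge_transitive (Sym n) (cay_adj S) \<longleftrightarrow>
             edge_transitive {1..n} (trans_adj S)))"
proof (intro conjI allI impI)
  fix S S' assume h: "(\<forall>s\<in>S. is_transposition n s) \<and> generates_Sym n S \<and>
            (\<forall>s\<in>S'. is_transposition n s) \<and> generates_Sym n S'"
  then have T1: "TS n S" and T2: "TS n S'" unfolding TS_def by auto
  show "graph_iso (Sym n) (cay_adj S) (Sym n) (cay_adj S') \<longleftrightarrow>
             graph_iso {1..n} (trans_adj S) {1..n} (trans_adj S')"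
    using partA_fwd[OF assms T1 _ T2] partA_bwd[OF T1 T2] h by blast
next
  fix S assume h: "(\<forall>s\<in>S. is_transposition n s) \<and> generates_Sym n S"
  then have T1: "TS n S" unfolding TS_def by auto
  show "edge_transitive (Sym n) (cay_adj S) \<longleftrightarrow> edge_transitive {1..n} (trans_adj S)"
    using partB_fwd[OF assms T1] partB_bwd[OF T1] h by blast
qed


end
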